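(* Let $X_1,\dots,X_n\in\mathbb{R}^d$ be mutually orthogonal ($X_i^\top X_j=0$ for $i\ne j$), $y_1,\dots,y_n\in\mathbb{R}$, $m\ge1$. For $\mathbf U=(u_1,\dots,u_m)\in\mathbb{R}^{d\times m}$ let $$\ell(\mathbf U)=\frac1{2n}\sum_{j=1}^n\Big(\frac1{\sqrt m\,d}\sum_{i=1}^m(X_j^\top u_i)^2-y_j\Big)^2,$$ and run gradient descent $\mathbf U^{(t+1)}=\mathbf U^{(t)}-\eta\nabla\ell(\mathbf U^{(t)})$ with step-size $\eta>0$, where $\mathbf U^{(t)}=(u_1^{(t)},\dots,u_m^{(t)})$. Define $$e_i^{(t)}=\frac1{\sqrt m\,d}\sum_{j=1}^m(X_i^\top u_j^{(t)})^2-y_i,\quad z_i^{(t)}=\frac{2\eta\|X_i\|^2e_i^{(t)}}{\sqrt m\,dn},\quad a_i=\frac{2\eta\|X_i\|^2y_i}{\sqrt m\,dn}.$$ Then $z_i^{(t+1)}=f_{a_i}(z_i^{(t)})$ for all $i$ and $t$, where $f_a(z)=z\big(z^2+(a-2)z+1-2a\big)$. *)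

theory Defs
  imports "HOL-Analysis.Analysis"
begin

text \<open>Data: samples X j in R^d (index type 'd), labels y j, indexed by a finite type 'n
  (so n = CARD('n)). Weights U in R^(d x m): U :: real^'m^'d, column i U = u_i.\<close>

definition loss :: "('n::finite \<Rightarrow> real^'d::finite) \<Rightarrow> ('n \<Rightarrow> real) \<Rightarrow> real^'m::finite^'d \<Rightarrow> real" where
  "loss X y U = 1 / (2 * real CARD('n)) *
     (\<Sum>j\<in>UNIV. (1 / (sqrt (real CARD('m)) * real CARD('d)) *
        (\<Sum>i\<in>UNIV. (X j \<bullet> column i U)^2) - y j)^2)"

definition has_gradient_at :: "('a::real_inner \<Rightarrow> real) \<Rightarrow> 'a \<Rightarrow> 'a \<Rightarrow> bool" where
  "has_gradient_at f G x \<longleftrightarrow> (f has_derivative (\<lambda>h. h \<bullet> G)) (at x)"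

definition err :: "('n::finite \<Rightarrow> real^'d::finite) \<Rightarrow> ('n \<Rightarrow> real) \<Rightarrow> real^'m::finite^'d \<Rightarrow> 'n \<Rightarrow> real" where
  "err X y U i = 1 / (sqrt (real CARD('m)) * real CARD('d)) *
        (\<Sum>j\<in>UNIV. (X i \<bullet> column j U)^2) - y i"

definition zval :: "real \<Rightarrow> ('n::finite \<Rightarrow> real^'d::finite) \<Rightarrow> ('n \<Rightarrow> real) \<Rightarrow> real^'m::finite^'d \<Rightarrow> 'n \<Rightarrow> real" where
  "zval \<eta> X y U i = 2 * \<eta> * (norm (X i))^2 * err X y U i /
      (sqrt (real CARD('m)) * real CARD('d) * real CARD('n))"

definition aval :: "real \<Rightarrow> ('n::finite \<Rightarrow> real^'d::finite) \<Rightarrow> ('n \<Rightarrow> real) \<Rightarrow> 'm::finite itself \<Rightarrow> 'n \<Rightarrow> real" where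
  "aval \<eta> X y _ i = 2 * \<eta> * (norm (X i))^2 * y i /
      (sqrt (real CARD('m)) * real CARD('d) * real CARD('n))"

definition fa :: "real \<Rightarrow> real \<Rightarrow> real" where
  "fa a z = z * (z^2 + (a - 2) * z + 1 - 2 * a)"

end

theory Submission imports Defs begin
lemma bl_col: "bounded_linear (\<lambda>U::real^'m::finite^'d::finite. x \<bullet> column i U)"
proof -
  have "linear (\<lambda>U::real^'m::finite^'d::finite. x \<bullet> column i U)"
    by (rule linearI) (simp_all add: column_def inner_vec_def vec_eq_iff sum.distrib algebra_simps sum_distrib_left)
  then show ?thesis using linear_conv_bounded_linear by blast
qed
lemma loss_deriv: "(loss X y has_derivative (\<lambda>h. 1 / (2 * real CARD('n)) *
     (\<Sum>j\<in>UNIV. 2 * (1 / (sqrt (real CARD('m)) * real CARD('d)) *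
        (\<Sum>i\<in>UNIV. (X j \<bullet> column i U)^2) - y j) * (1 / (sqrt (real CARD('m)) * real CARD('d)) *
        (\<Sum>i\<in>UNIV. 2 * (X j \<bullet> column i U) * (X j \<bullet> column i h)))))) (at U)"
  for X :: "'n::finite \<Rightarrow> real^'d::finite" and U :: "real^'m::finite^'d"
  unfolding loss_def
  apply (rule bounded_linear.has_derivative[OF bl_col] | rule derivative_eq_intros | simp)+
  apply (rule ext)
  apply (simp add: divide_simps)
  apply (intro sum.cong refl)
  apply (simp add: algebra_simps)
  done

lemma step:
  fixes X :: "'n::finite \<Rightarrow> real^'d::finite" and y :: "'n \<Rightarrow> real"
    and U :: "real^'m::finite^'d" and G :: "real^'m^'d"
  assumes orth: "\<And>i j. i \<noteq> j \<Longrightarrow> X i \<bullet> X j = 0"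
    and grad: "has_gradient_at (loss X y) G U"
  shows "X k \<bullet> column i (U - \<eta> *\<^sub>R G) = (1 - zval \<eta> X y U k) * (X k \<bullet> column i U)"
proof -
  define c where "c = 1 / (sqrt (real CARD('m)) * real CARD('d))"
  define H :: "real^'m^'d" where "H = (\<chi> r. \<chi> i'. if i' = i then X k $ r else 0)"
  have "(\<lambda>h. h \<bullet> G) = (\<lambda>h. 1 / (2 * real CARD('n)) *
     (\<Sum>j\<in>UNIV. 2 * (1 / (sqrt (real CARD('m)) * real CARD('d)) *
        (\<Sum>i\<in>UNIV. (X j \<bullet> column i U)^2) - y j) * (1 / (sqrt (real CARD('m)) * real CARD('d)) *
        (\<Sum>i\<in>UNIV. 2 * (X j \<bullet> column i U) * (X j \<bullet> column i h)))))"
    using has_derivative_unique[OF grad[unfolded has_gradient_at_def] loss_deriv] .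
  then have eq: "H \<bullet> G = 1 / (2 * real CARD('n)) *
     (\<Sum>j\<in>UNIV. 2 * err X y U j * (c *
        (\<Sum>i\<in>UNIV. 2 * (X j \<bullet> column i U) * (X j \<bullet> column i H))))"
    unfolding err_def c_def by metis
  have colH: "column i' H = (if i' = i then X k else 0)" for i'
    by (simp add: H_def column_def vec_eq_iff)
  have HG: "H \<bullet> G = X k \<bullet> column i G"
    proof -
    have m: "(if P then a else 0) * b = (if P then a * b else (0::real))" for P a b by simp
    show ?thesis by (simp add: H_def column_def inner_vec_def m)
  qed
  have XX: "X j \<bullet> X k = (if j = k then (norm (X k))^2 else 0)" for j
    using orth by (simp add: power2_norm_eq_inner)
  have "H \<bullet> G = 1 / (2 * real CARD('n)) *
     (\<Sum>j\<in>UNIV. 2 * err X y U j * (c * (2 * (X j \<bullet> column i U) * (X j \<bullet> X k))))"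
    unfolding eq colH by (simp add: if_distrib sum.delta cong: if_cong)
  also have "\<dots> = 1 / (2 * real CARD('n)) * (2 * err X y U k * (c * (2 * (X k \<bullet> column i U) * (norm (X k))^2)))"
    unfolding XX by (simp add: if_distrib sum.delta cong: if_cong)
  finally have G1: "X k \<bullet> column i G = 1 / (2 * real CARD('n)) * (2 * err X y U k * (c * (2 * (X k \<bullet> column i U) * (norm (X k))^2)))"
    using HG by simp
  have "X k \<bullet> column i (U - \<eta> *\<^sub>R G) = X k \<bullet> column i U - \<eta> * (X k \<bullet> column i G)"
    by (simp add: column_def inner_vec_def sum_subtractf sum_distrib_left algebra_simps)
  also have "\<dots> = (1 - zval \<eta> X y U k) * (X k \<bullet> column i U)"
    unfolding G1 zval_def c_def by (simp add: field_simps)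
  finally show ?thesis .
qed
theorem theorem4:
  fixes X :: "'n::finite \<Rightarrow> real^'d::finite" and y :: "'n \<Rightarrow> real"
    and Us :: "nat \<Rightarrow> real^'m::finite^'d" and G :: "nat \<Rightarrow> real^'m^'d"
    and \<eta> :: real
  assumes orth: "\<And>i j. i \<noteq> j \<Longrightarrow> X i \<bullet> X j = 0"
    and eta: "\<eta> > 0"
    and grad: "\<And>t. has_gradient_at (loss X y) (G t) (Us t)"
    and gd: "\<And>t. Us (Suc t) = Us t - \<eta> *\<^sub>R G t"
  shows "\<forall>i t. zval \<eta> X y (Us (Suc t)) i = fa (aval \<eta> X y TYPE('m) i) (zval \<eta> X y (Us t) i)"
proof (intro allI)
  fix k t
  define z where "z = zval \<eta> X y (Us t) k"
  have s: "X k \<bullet> column i (Us (Suc t)) = (1 - z) * (X k \<bullet> column i (Us t))" for i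
    unfolding gd z_def by (rule step[OF orth grad])
  have e: "err X y (Us (Suc t)) k = (1 - z)^2 * (err X y (Us t) k + y k) - y k"
  proof -
    have q: "(\<Sum>j\<in>UNIV. ((1 - z) * (X k \<bullet> column j (Us t)))^2) = (1 - z)^2 * (\<Sum>j\<in>UNIV. (X k \<bullet> column j (Us t))^2)"
      by (simp add: power_mult_distrib sum_distrib_left)
    show ?thesis unfolding err_def s q by (simp add: algebra_simps)
  qed
  define K where "K = 2 * \<eta> * (norm (X k))^2 / (sqrt (real CARD('m)) * real CARD('d) * real CARD('n))"
  have zv: "zval \<eta> X y U k = K * err X y U k" for U :: "real^'m^'d"
    unfolding zval_def K_def by simp
  have av: "aval \<eta> X y TYPE('m) k = K * y k"
    unfolding aval_def K_def by simp
  have "zval \<eta> X y (Us (Suc t)) k = K * ((1 - z)^2 * (err X y (Us t) k + y k) - y k)"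
    using zv e by simp
  also have "\<dots> = (1 - z)^2 * (z + K * y k) - K * y k"
    unfolding z_def zv by (simp add: algebra_simps)
  also have "\<dots> = fa (K * y k) z"
    unfolding fa_def by (simp add: algebra_simps power2_eq_square power3_eq_cube)
  finally show "zval \<eta> X y (Us (Suc t)) k = fa (aval \<eta> X y TYPE('m) k) (zval \<eta> X y (Us t) k)"
    using av z_def by simp
qed

end
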